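(* Let $n\ge1$, let $\Delta\subset\mathbb{R}^n$ be an $n$-simplex with vertices $\mathbf{x}_0,\dots,\mathbf{x}_n$, and let $f\colon\Delta\to\mathbb{R}$ be convex. For every partition $\mathcal{K}=\{K_1,\dots,K_p\}$ of $N=\{0,\dots,n\}$, $$(n+1)\operatorname{Avg}(f,\Delta)\le \sum_{i=1}^p\operatorname{card}(K_i)\operatorname{Avg}(f,\Delta_{K_i})\le f(\mathbf{x}_0)+\dots+f(\mathbf{x}_n).$$
   Context: $\mathbf{x}_0,\dots,\mathbf{x}_n\in\mathbb{R}^n$ are affinely independent and $\Delta=\operatorname{conv}\{\mathbf{x}_0,\dots,\mathbf{x}_n\}$. For nonempty $K\subset N$, $\Delta_K=\operatorname{conv}\{\mathbf{x}_i:i\in K\}$, a $(\operatorname{card}K-1)$-simplex. For a $k$-simplex $\Sigma$ and integrable $g$, $\operatorname{Avg}(g,\Sigma)=\frac{1}{\operatorname{Vol}_k(\Sigma)}\int_\Sigma g\,d\mathbf{x}$ with respect to $k$-dimensional Lebesgue measure on the affine hull of $\Sigma$; for a $0$-simplex $\{\mathbf{y}\}$, $\operatorname{Avg}(g,\{\mathbf{y}\})=g(\mathbf{y})$. A partition of $N$ is a family of pairwise disjoint nonempty subsets of $N$ with union $N$. *)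

theory Defs
  imports "HOL-Analysis.Analysis" "HOL-Library.Disjoint_Sets"
begin

text \<open>Barycentric/affine parametrisation of the face \<open>\<Delta>_K = conv {x i | i \<in> K}\<close>:
  with \<open>j = Min K\<close> and \<open>I = K - {j}\<close>, the point with parameters \<open>\<mu> \<in> \<real>^I\<close> is
  \<open>x j + (\<Sum>i\<in>I. \<mu> i (x i - x j))\<close>, and \<open>\<Delta>_K\<close> is the image of the standard
  simplex \<open>{\<mu> \<ge> 0, \<Sum>\<mu> \<le> 1}\<close> in \<open>\<real>^I\<close>.\<close>

definition face_param_set :: "nat set \<Rightarrow> (nat \<Rightarrow> real) set" where
  "face_param_set K = (let I = K - {Min K} in
     {\<mu> \<in> PiE I (\<lambda>_. UNIV). (\<forall>i\<in>I. 0 \<le> \<mu> i) \<and> sum \<mu> I \<le> 1})"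

definition face_param_measure :: "nat set \<Rightarrow> (nat \<Rightarrow> real) measure" where
  "face_param_measure K = PiM (K - {Min K}) (\<lambda>_. lborel)"

definition face_point :: "(nat \<Rightarrow> 'a::real_vector) \<Rightarrow> nat set \<Rightarrow> (nat \<Rightarrow> real) \<Rightarrow> 'a" where
  "face_point x K \<mu> = x (Min K) + (\<Sum>i\<in>K - {Min K}. \<mu> i *\<^sub>R (x i - x (Min K)))"

text \<open>\<open>Avg(g, \<Delta>_K)\<close>: average of \<open>g\<close> over the \<open>(card K - 1)\<close>-simplex \<open>\<Delta>_K\<close> w.r.t.
  \<open>(card K - 1)\<close>-dimensional Lebesgue measure on its affine hull, computed through the
  affine parametrisation (which scales that measure by a constant factor, so the average
  is unchanged). For \<open>card K = 1\<close> this is \<open>g (x j)\<close>.\<close>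

definition Avg_face :: "('a::real_vector \<Rightarrow> real) \<Rightarrow> (nat \<Rightarrow> 'a) \<Rightarrow> nat set \<Rightarrow> real" where
  "Avg_face g x K =
     (LINT \<mu>:face_param_set K|face_param_measure K. g (face_point x K \<mu>))
       / measure (face_param_measure K) (face_param_set K)"

end

theory Submission
  imports Defs "HOL-Probability.Distributions"
begin


definition wexp :: "real \<Rightarrow> ennreal" where
  "wexp y = ennreal (exp (- y)) * indicator {0..} y"

definition W :: "nat set \<Rightarrow> (nat \<Rightarrow> real) \<Rightarrow> ennreal" where
  "W I t = (\<Prod>i\<in>I. wexp (t i))"

lemma wexp_measurable[measurable]: "wexp \<in> borel_measurable borel"
  unfolding wexp_def by measurable

lemma W_measurable[measurable]: "finite I \<Longrightarrow> J \<subseteq> I \<Longrightarrow> W J \<in> borel_measurable (PiM I (\<lambda>_. lborel))"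
  unfolding W_def by (measurable; auto)

lemma nn_integral_wexp: "(\<integral>\<^sup>+y. wexp y \<partial>lborel) = 1"
  using nn_intergal_power_times_exp_Ici[of 0] by (simp add: wexp_def)

lemma nn_integral_W: "finite I \<Longrightarrow> (\<integral>\<^sup>+t. W I t \<partial>PiM I (\<lambda>_. lborel)) = 1"
proof -
  assume "finite I"
  interpret product_sigma_finite "\<lambda>_. lborel" by standard
  show ?thesis unfolding W_def
    using product_nn_integral_prod[of I "\<lambda>_. wexp"] \<open>finite I\<close> by (simp add: nn_integral_wexp)
qed

lemma restrict_W:
  assumes K: "finite K" "L \<subseteq> K" and phi[measurable]: "\<phi> \<in> borel_measurable (PiM L (\<lambda>_. lborel))"
  shows "(\<integral>\<^sup>+t. W K t * \<phi> (restrict t L) \<partial>PiM K (\<lambda>_. lborel)) = (\<integral>\<^sup>+t. W L t * \<phi> t \<partial>PiM L (\<lambda>_. lborel))"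
proof -
  interpret product_sigma_finite "\<lambda>_. lborel" by standard
  define J where "J = K - L"
  have KLJ: "K = L \<union> J" "L \<inter> J = {}" "finite L" "finite J" using K by (auto simp: J_def finite_subset)
  have mK: "(\<lambda>t. W K t * \<phi> (restrict t L)) \<in> borel_measurable (PiM (L \<union> J) (\<lambda>_. lborel))"
  proof -
    have "(\<lambda>x. \<phi> (restrict x L)) \<in> borel_measurable (PiM (L \<union> J) (\<lambda>_. lborel))"
      by (rule measurable_compose[OF measurable_restrict_subset phi]) auto
    moreover have "W K \<in> borel_measurable (PiM (L \<union> J) (\<lambda>_. lborel))"
      using KLJ by (intro W_measurable) auto
    ultimately show ?thesis by (intro borel_measurable_times_ennreal)
  qed
  have "(\<integral>\<^sup>+t. W K t * \<phi> (restrict t L) \<partial>PiM K (\<lambda>_. lborel))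
     = (\<integral>\<^sup>+x. (\<integral>\<^sup>+y. W K (merge L J (x,y)) * \<phi> (restrict (merge L J (x,y)) L) \<partial>PiM J (\<lambda>_. lborel)) \<partial>PiM L (\<lambda>_. lborel))"
    using mK unfolding KLJ(1) by (rule product_nn_integral_fold[OF KLJ(2-4)])
  also have "\<dots> = (\<integral>\<^sup>+x. (\<integral>\<^sup>+y. (W L x * \<phi> x) * W J y \<partial>PiM J (\<lambda>_. lborel)) \<partial>PiM L (\<lambda>_. lborel))"
  proof (intro nn_integral_cong)
    fix x y :: "nat \<Rightarrow> real" assume x: "x \<in> space (PiM L (\<lambda>_. lborel))" and y: "y \<in> space (PiM J (\<lambda>_. lborel))"
    have r: "restrict (merge L J (x,y)) L = x" using x by (auto simp: space_PiM merge_def PiE_def extensional_def restrict_def fun_eq_iff)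
    have "W K (merge L J (x,y)) = W L x * W J y"
      unfolding W_def KLJ(1) using KLJ by (subst prod.union_disjoint) (auto simp: merge_def intro!: prod.cong arg_cong2[where f=times])
    then show "W K (merge L J (x,y)) * \<phi> (restrict (merge L J (x,y)) L) = (W L x * \<phi> x) * W J y"
      by (simp add: r mult_ac)
  qed
  also have "\<dots> = (\<integral>\<^sup>+x. W L x * \<phi> x \<partial>PiM L (\<lambda>_. lborel))"
    using KLJ by (simp add: nn_integral_cmult nn_integral_W)
  finally show ?thesis .
qed



lemma scale_meas[measurable]:
  fixes I J :: "nat set" and c :: real
  assumes "I \<subseteq> J"
  shows "(\<lambda>x. restrict (\<lambda>k. c * x k) I) \<in> measurable (PiM J (\<lambda>_. lborel)) (PiM I (\<lambda>_. lborel))"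
proof (intro measurable_restrict)
  fix k assume "k \<in> I"
  then have k: "k \<in> J" using assms by auto
  show "(\<lambda>x. c * x k) \<in> measurable (PiM J (\<lambda>_. lborel)) lborel"
    by (rule measurable_compose[OF measurable_component_singleton[OF k]]) simp
qed

lemma upd_meas:
  fixes I :: "nat set" and y :: real
  assumes "i \<notin> I"
  shows "(\<lambda>x. x(i := y)) \<in> measurable (PiM I (\<lambda>_. lborel)) (PiM (insert i I) (\<lambda>_. lborel))"
proof -
  have "(\<lambda>x. \<lambda>k\<in>insert i I. if k = i then y else x k) \<in> measurable (PiM I (\<lambda>_. lborel)) (PiM (insert i I) (\<lambda>_. lborel))"
  proof (intro measurable_restrict)
    fix k assume k: "k \<in> insert i I"
    show "(\<lambda>x. if k = i then y else x k) \<in> measurable (PiM I (\<lambda>_. lborel)) lborel"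
    proof (cases "k = i")
      case False then have "k \<in> I" using k by auto
      then show ?thesis using False by simp
    qed simp
  qed
  moreover have "x \<in> space (PiM I (\<lambda>_. lborel)) \<Longrightarrow> (\<lambda>k\<in>insert i I. if k = i then y else x k) = x(i := y)" for x
    using assms by (auto simp: space_PiM PiE_def extensional_def fun_eq_iff)
  ultimately show ?thesis by (rule measurable_cong[THEN iffD1, rotated])
qed

lemma upd2_meas:
  fixes I :: "nat set"
  assumes "i \<notin> I"
  shows "(\<lambda>(y, x). x(i := y)) \<in> measurable (lborel \<Otimes>\<^sub>M PiM I (\<lambda>_. lborel)) (PiM (insert i I) (\<lambda>_. lborel))"
proof -
  have "(\<lambda>p. \<lambda>k\<in>insert i I. if k = i then fst p else snd p k) \<in> measurable (lborel \<Otimes>\<^sub>M PiM I (\<lambda>_. lborel)) (PiM (insert i I) (\<lambda>_. lborel))"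
  proof (intro measurable_restrict)
    fix k assume k: "k \<in> insert i I"
    show "(\<lambda>p. if k = i then fst p else snd p k) \<in> measurable (lborel \<Otimes>\<^sub>M PiM I (\<lambda>_. lborel)) lborel"
    proof (cases "k = i")
      case False then have "k \<in> I" using k by auto
      then show ?thesis using False by simp
    qed simp
  qed
  moreover have "p \<in> space (lborel \<Otimes>\<^sub>M PiM I (\<lambda>_. lborel)) \<Longrightarrow> (\<lambda>k\<in>insert i I. if k = i then fst p else snd p k) = (case p of (y, x) \<Rightarrow> x(i := y))" for p
    using assms by (auto simp: space_PiM PiE_def extensional_def fun_eq_iff space_pair_measure split: prod.splits)
  ultimately show ?thesis by (rule measurable_cong[THEN iffD1, rotated])
qed

lemma upd_int_meas:
  fixes I :: "nat set"
  assumes "i \<notin> I" "finite I" "\<psi> \<in> borel_measurable (PiM (insert i I) (\<lambda>_. lborel))"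
  shows "(\<lambda>y. \<integral>\<^sup>+x. \<psi> (x(i := y)) \<partial>PiM I (\<lambda>_. lborel)) \<in> borel_measurable lborel"
    and "(\<lambda>x. \<integral>\<^sup>+y. \<psi> (x(i := y)) \<partial>lborel) \<in> borel_measurable (PiM I (\<lambda>_. lborel))"
proof -
  interpret F: finite_product_sigma_finite "\<lambda>_. lborel" I by standard (use assms in auto)
  have m: "(\<lambda>(y, x). \<psi> (x(i := y))) \<in> borel_measurable (lborel \<Otimes>\<^sub>M PiM I (\<lambda>_. lborel))"
    using measurable_comp[OF upd2_meas[OF assms(1)] assms(3)] by (simp add: comp_def case_prod_beta')
  show "(\<lambda>y. \<integral>\<^sup>+x. \<psi> (x(i := y)) \<partial>PiM I (\<lambda>_. lborel)) \<in> borel_measurable lborel"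
    using F.borel_measurable_nn_integral[of "\<lambda>y x. \<psi> (x(i := y))" lborel] m by simp
  have m2: "(\<lambda>(x, y). \<psi> (x(i := y))) \<in> borel_measurable (PiM I (\<lambda>_. lborel) \<Otimes>\<^sub>M lborel)"
    using measurable_comp[OF measurable_pair_swap' m] by (simp add: comp_def case_prod_beta')
  show "(\<lambda>x. \<integral>\<^sup>+y. \<psi> (x(i := y)) \<partial>lborel) \<in> borel_measurable (PiM I (\<lambda>_. lborel))"
    using lborel.borel_measurable_nn_integral[of "\<lambda>x y. \<psi> (x(i := y))" "PiM I (\<lambda>_. lborel)"] m2 by simp
qed

lemma scale_PiM:
  fixes I :: "nat set" and c :: real
  assumes "finite I" "0 < c" "\<phi> \<in> borel_measurable (PiM I (\<lambda>_. lborel))"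
  shows "(\<integral>\<^sup>+x. \<phi> x \<partial>PiM I (\<lambda>_. lborel))
       = ennreal (c ^ card I) * (\<integral>\<^sup>+x. \<phi> (restrict (\<lambda>i. c * x i) I) \<partial>PiM I (\<lambda>_. lborel))"
  using assms(1,3)
proof (induction I arbitrary: \<phi> rule: finite_induct)
  case empty
  show ?case
    by (simp add: PiM_empty nn_integral_count_space_finite)
next
  case (insert i I \<phi>)
  interpret product_sigma_finite "\<lambda>_. lborel" by standard
  note [measurable] = insert.prems
  define s where "s = (\<lambda>x::nat \<Rightarrow> real. restrict (\<lambda>k. c * x k) I)"
  have s_meas[measurable]: "s \<in> measurable (PiM (insert i I) (\<lambda>_. lborel)) (PiM I (\<lambda>_. lborel))"
    unfolding s_def by (intro scale_meas) auto
  have upd: "(\<lambda>x. \<phi> (x(i := y))) \<in> borel_measurable (PiM I (\<lambda>_. lborel))" for y :: real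
    using measurable_comp[OF upd_meas insert.prems] insert.hyps
    by (simp add: comp_def)
  define \<psi> where "\<psi> = (\<lambda>z. \<phi> ((s z)(i := z i)))"
  have \<psi>_meas[measurable]: "\<psi> \<in> borel_measurable (PiM (insert i I) (\<lambda>_. lborel))"
  proof -
    have "(\<lambda>z. \<lambda>k\<in>insert i I. if k = i then z k else c * z k) \<in> measurable (PiM (insert i I) (\<lambda>_. lborel)) (PiM (insert i I) (\<lambda>_. lborel))"
    proof (intro measurable_restrict)
      fix k assume k: "k \<in> insert i I"
      show "(\<lambda>z. if k = i then z k else c * z k) \<in> measurable (PiM (insert i I) (\<lambda>_. lborel)) lborel"
        using k by (cases "k = i") (simp_all add: measurable_compose[OF measurable_component_singleton[OF k]])
    qed
    moreover have "z \<in> space (PiM (insert i I) (\<lambda>_. lborel)) \<Longrightarrow> (\<lambda>k\<in>insert i I. if k = i then z k else c * z k) = (s z)(i := z i)" for z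
      using insert.hyps by (auto simp: space_PiM PiE_def extensional_def fun_eq_iff s_def)
    ultimately have "(\<lambda>z. (s z)(i := z i)) \<in> measurable (PiM (insert i I) (\<lambda>_. lborel)) (PiM (insert i I) (\<lambda>_. lborel))"
      by (rule measurable_cong[THEN iffD1, rotated])
    from measurable_comp[OF this insert.prems] show ?thesis by (simp add: \<psi>_def comp_def)
  qed
  have "(\<integral>\<^sup>+x. \<phi> x \<partial>PiM (insert i I) (\<lambda>_. lborel))
      = (\<integral>\<^sup>+y. (\<integral>\<^sup>+x. \<phi> (x(i := y)) \<partial>PiM I (\<lambda>_. lborel)) \<partial>lborel)"
    using insert by (intro product_nn_integral_insert_rev) auto
  also have "\<dots> = (\<integral>\<^sup>+y. ennreal (c ^ card I) * (\<integral>\<^sup>+x. \<phi> ((s x)(i := y)) \<partial>PiM I (\<lambda>_. lborel)) \<partial>lborel)"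
    unfolding s_def by (rule nn_integral_cong, rule insert.IH[OF upd])
  also have "\<dots> = ennreal (c ^ card I) * (\<integral>\<^sup>+y. (\<integral>\<^sup>+x. \<psi> (x(i := y)) \<partial>PiM I (\<lambda>_. lborel)) \<partial>lborel)"
  proof -
    have "\<And>x y. x \<in> space (PiM I (\<lambda>_. lborel)) \<Longrightarrow> \<psi> (x(i := y)) = \<phi> ((s x)(i := y))"
      using insert.hyps by (auto simp: \<psi>_def s_def restrict_def intro!: arg_cong[where f=\<phi>])
    then have "(\<integral>\<^sup>+y. ennreal (c ^ card I) * (\<integral>\<^sup>+x. \<phi> ((s x)(i := y)) \<partial>PiM I (\<lambda>_. lborel)) \<partial>lborel)
       = (\<integral>\<^sup>+y. ennreal (c ^ card I) * (\<integral>\<^sup>+x. \<psi> (x(i := y)) \<partial>PiM I (\<lambda>_. lborel)) \<partial>lborel)"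
      by (intro nn_integral_cong arg_cong2[where f=times] refl) simp
    also have "\<dots> = ennreal (c ^ card I) * (\<integral>\<^sup>+y. (\<integral>\<^sup>+x. \<psi> (x(i := y)) \<partial>PiM I (\<lambda>_. lborel)) \<partial>lborel)"
      by (rule nn_integral_cmult, rule upd_int_meas(1)) (use insert.hyps \<psi>_meas in auto)
    finally show ?thesis .
  qed
  also have "(\<integral>\<^sup>+y. (\<integral>\<^sup>+x. \<psi> (x(i := y)) \<partial>PiM I (\<lambda>_. lborel)) \<partial>lborel)
      = (\<integral>\<^sup>+x. (\<integral>\<^sup>+y. \<psi> (x(i := y)) \<partial>lborel) \<partial>PiM I (\<lambda>_. lborel))"
    using insert.hyps by (simp add: product_nn_integral_insert_rev[symmetric] product_nn_integral_insert)
  also have "\<dots> = (\<integral>\<^sup>+x. ennreal c * (\<integral>\<^sup>+y. \<phi> (restrict (\<lambda>k. c * (x(i:=y)) k) (insert i I)) \<partial>lborel) \<partial>PiM I (\<lambda>_. lborel))"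
  proof (rule nn_integral_cong)
    fix x :: "nat \<Rightarrow> real" assume x: "x \<in> space (PiM I (\<lambda>_. lborel))"
    have sx: "s x \<in> space (PiM I (\<lambda>_. lborel))" by (simp add: s_def space_PiM)
    have m: "(\<lambda>y. \<phi> ((s x)(i := y))) \<in> borel_measurable borel"
      using measurable_comp[OF measurable_component_update[OF sx insert.hyps(2)] insert.prems]
      by (simp add: comp_def)
    have "(\<integral>\<^sup>+y. \<psi> (x(i := y)) \<partial>lborel) = (\<integral>\<^sup>+y. \<phi> ((s x)(i := y)) \<partial>lborel)"
      using insert.hyps by (intro nn_integral_cong) (auto simp: \<psi>_def s_def restrict_def intro!: arg_cong[where f=\<phi>])
    also have "\<dots> = ennreal \<bar>c\<bar> * (\<integral>\<^sup>+y. \<phi> ((s x)(i := 0 + c * y)) \<partial>lborel)"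
      using nn_integral_real_affine[OF m, of c 0] assms(2) by simp
    also have "\<dots> = ennreal c * (\<integral>\<^sup>+y. \<phi> (restrict (\<lambda>k. c * (x(i:=y)) k) (insert i I)) \<partial>lborel)"
      using assms(2) insert.hyps by (intro arg_cong2[where f=times] refl nn_integral_cong arg_cong[where f=\<phi>]) (auto simp: s_def restrict_def fun_eq_iff)
    finally show "(\<integral>\<^sup>+y. \<psi> (x(i := y)) \<partial>lborel) = ennreal c * (\<integral>\<^sup>+y. \<phi> (restrict (\<lambda>k. c * (x(i:=y)) k) (insert i I)) \<partial>lborel)" .
  qed
  also have "\<dots> = ennreal c * (\<integral>\<^sup>+x. \<phi> (restrict (\<lambda>k. c * x k) (insert i I)) \<partial>PiM (insert i I) (\<lambda>_. lborel))"
  proof -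
    have \<Phi>: "(\<lambda>z. \<phi> (restrict (\<lambda>k. c * z k) (insert i I))) \<in> borel_measurable (PiM (insert i I) (\<lambda>_. lborel))"
      using measurable_comp[OF scale_meas[OF subset_refl] insert.prems] by (simp add: comp_def)
    show ?thesis
      using insert.hyps
      by (subst nn_integral_cmult[OF upd_int_meas(2)[OF _ _ \<Phi>]]) (auto simp: product_nn_integral_insert[OF _ _ \<Phi>])
  qed
  finally have eq: "integral\<^sup>N (Pi\<^sub>M (insert i I) (\<lambda>_. lborel)) \<phi> = ennreal (c ^ card I) * (ennreal c * (\<integral>\<^sup>+x. \<phi> (restrict (\<lambda>k. c * x k) (insert i I)) \<partial>PiM (insert i I) (\<lambda>_. lborel)))" .
  have "ennreal (c ^ card (insert i I)) = ennreal c * ennreal (c ^ card I)"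
    using insert.hyps assms(2) by (simp add: ennreal_mult)
  then show ?case using eq by (simp only: mult.assoc mult.commute[of "ennreal c"])
qed



definition pt :: "(nat \<Rightarrow> 'a::real_vector) \<Rightarrow> nat \<Rightarrow> nat set \<Rightarrow> (nat \<Rightarrow> real) \<Rightarrow> 'a" where
  "pt xs j I \<mu> = xs j + (\<Sum>i\<in>I. \<mu> i *\<^sub>R (xs i - xs j))"

definition HH :: "(nat \<Rightarrow> 'a::real_vector) \<Rightarrow> ('a \<Rightarrow> real) \<Rightarrow> nat set \<Rightarrow> (nat \<Rightarrow> real) \<Rightarrow> ennreal" where
  "HH xs F K t = ennreal ((\<Sum>i\<in>K. t i) * F ((\<Sum>i\<in>K. t i *\<^sub>R xs i) /\<^sub>R (\<Sum>i\<in>K. t i)))"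

definition Sset :: "nat set \<Rightarrow> real \<Rightarrow> (nat \<Rightarrow> real) set" where
  "Sset I T = {\<mu>. (\<forall>i\<in>I. 0 \<le> \<mu> i) \<and> sum \<mu> I \<le> T}"

lemma pt_meas[measurable]:
  fixes xs :: "nat \<Rightarrow> 'a::euclidean_space"
  assumes "finite I"
  shows "(\<lambda>p. pt xs j I (\<lambda>i. fst p i / snd p)) \<in> borel_measurable (PiM I (\<lambda>_. lborel) \<Otimes>\<^sub>M lborel)"
  unfolding pt_def using assms by measurable

lemma pt_meas2[measurable]:
  fixes xs :: "nat \<Rightarrow> 'a::euclidean_space"
  assumes "finite I"
  shows "pt xs j I \<in> borel_measurable (PiM I (\<lambda>_. lborel))"
  unfolding pt_def using assms by measurable

lemma HH_meas[measurable]: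
  fixes xs :: "nat \<Rightarrow> 'a::euclidean_space"
  assumes "finite K" "L \<subseteq> K" "F \<in> borel_measurable borel"
  shows "HH xs F L \<in> borel_measurable (PiM K (\<lambda>_. lborel))"
proof -
  note [measurable] = assms(3)
  have [simp]: "i \<in> L \<Longrightarrow> i \<in> K" for i using assms(2) by auto
  show ?thesis unfolding HH_def by measurable
qed



lemma W_insert:
  assumes "finite I" "j \<notin> I" "x \<in> space (PiM I (\<lambda>_. lborel))"
  shows "W (insert j I) (x(j := y)) = wexp y * W I x"
proof -
  have "(\<Prod>i\<in>I. wexp ((x(j := y)) i)) = (\<Prod>i\<in>I. wexp (x i))"
    using assms(2) by (intro prod.cong) auto
  then show ?thesis using assms unfolding W_def by simp
qed

lemma W_expand: "finite I \<Longrightarrow> W I x = ennreal (exp (- sum x I)) * indicator {x. \<forall>i\<in>I. 0 \<le> x i} x"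
proof (induction I rule: finite_induct)
  case empty then show ?case by (simp add: W_def)
next
  case (insert i I)
  have "W (insert i I) x = wexp (x i) * W I x" using insert by (simp add: W_def)
  also have "\<dots> = ennreal (exp (- x i)) * ennreal (exp (- sum x I)) * (indicator {0..} (x i) * indicator {x. \<forall>i\<in>I. 0 \<le> x i} x)"
    by (simp add: insert.IH wexp_def mult_ac)
  also have "ennreal (exp (- x i)) * ennreal (exp (- sum x I)) = ennreal (exp (- sum x (insert i I)))"
    using insert by (simp add: ennreal_mult[symmetric] exp_add[symmetric])
  also have "indicator {0..} (x i) * indicator {x. \<forall>i\<in>I. 0 \<le> x i} x = (indicator {x. \<forall>i\<in>insert i I. 0 \<le> x i} x :: ennreal)"
    by (simp add: indicator_def)
  finally show ?case .
qed

lemma Sset_pred1[measurable]: "finite I \<Longrightarrow> Measurable.pred (PiM I (\<lambda>_. borel)) (\<lambda>x. x \<in> Sset I T)"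
  unfolding Sset_def by measurable

lemma Sset_pred2[measurable]: "finite I \<Longrightarrow> Measurable.pred (PiM I (\<lambda>_. lborel)) (\<lambda>x. x \<in> Sset I T)"
  unfolding Sset_def by measurable

lemma core:
  fixes xs :: "nat \<Rightarrow> 'a::euclidean_space" and F :: "'a \<Rightarrow> real"
  assumes I: "finite I" "j \<notin> I" and F[measurable]: "F \<in> borel_measurable borel" and Fnn: "\<And>y. 0 \<le> F y"
  shows "(\<integral>\<^sup>+t. W (insert j I) t * HH xs F (insert j I) t \<partial>PiM (insert j I) (\<lambda>_. lborel))
       = ennreal (fact (card I + 1)) * (\<integral>\<^sup>+\<mu>. indicator (Sset I 1) \<mu> * ennreal (F (pt xs j I \<mu>)) \<partial>PiM I (\<lambda>_. lborel))"
proof -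
  interpret product_sigma_finite "\<lambda>_. lborel" by standard
  interpret PI: finite_product_sigma_finite "\<lambda>_. lborel" I by standard (use I in auto)
  define s where "s = (\<lambda>x::nat \<Rightarrow> real. sum x I)"
  define Q where "Q = (\<lambda>(x::nat \<Rightarrow> real) (T::real). ennreal (T * F (pt xs j I (\<lambda>i. x i / T))))"
  define A where "A = (\<integral>\<^sup>+\<mu>. indicator (Sset I 1) \<mu> * ennreal (F (pt xs j I \<mu>)) \<partial>PiM I (\<lambda>_. lborel))"
  have HQ: "HH xs F (insert j I) (x(j := y)) = Q x (y + s x)" for x y
  proof -
    have sum1: "(\<Sum>k\<in>insert j I. (x(j:=y)) k) = y + s x"
      using I unfolding s_def by (simp, intro sum.cong) auto
    have sum2: "(\<Sum>k\<in>insert j I. (x(j:=y)) k *\<^sub>R xs k) = y *\<^sub>R xs j + (\<Sum>i\<in>I. x i *\<^sub>R xs i)"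
      using I by (simp, intro sum.cong) auto
    show ?thesis
    proof (cases "y + s x = 0")
      case True then show ?thesis unfolding HH_def Q_def sum1 by simp
    next
      case False
      define T where "T = y + s x"
      have T0: "T \<noteq> 0" using False by (simp add: T_def)
      have e1: "(\<Sum>i\<in>I. (x i / T) *\<^sub>R (xs i - xs j)) = (1/T) *\<^sub>R (\<Sum>i\<in>I. x i *\<^sub>R xs i) - (s x / T) *\<^sub>R xs j"
        by (simp add: scaleR_diff_right sum_subtractf scaleR_sum_right scaleR_sum_left[symmetric] s_def sum_divide_distrib)
      have "(y *\<^sub>R xs j + (\<Sum>i\<in>I. x i *\<^sub>R xs i)) /\<^sub>R T = pt xs j I (\<lambda>i. x i / T)"
      proof -
        have "y / T = 1 - s x / T" using T0 by (simp add: T_def field_simps)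
        then show ?thesis unfolding pt_def e1
          by (simp add: scaleR_add_right scaleR_diff_left divide_inverse_commute algebra_simps flip: scaleR_add_left)
      qed
      then show ?thesis unfolding HH_def Q_def sum1 sum2 T_def by simp
    qed
  qed
  have step1: "(\<integral>\<^sup>+t. W (insert j I) t * HH xs F (insert j I) t \<partial>PiM (insert j I) (\<lambda>_. lborel))
     = (\<integral>\<^sup>+x. (\<integral>\<^sup>+T. ennreal (exp (- T)) * indicator (Sset I T) x * Q x T \<partial>lborel) \<partial>PiM I (\<lambda>_. lborel))"
  proof -
    have m: "(\<lambda>t. W (insert j I) t * HH xs F (insert j I) t) \<in> borel_measurable (PiM (insert j I) (\<lambda>_. lborel))"
      using I by (intro borel_measurable_times_ennreal W_measurable HH_meas F) auto
    have "(\<integral>\<^sup>+t. W (insert j I) t * HH xs F (insert j I) t \<partial>PiM (insert j I) (\<lambda>_. lborel))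
        = (\<integral>\<^sup>+x. (\<integral>\<^sup>+y. W (insert j I) (x(j := y)) * HH xs F (insert j I) (x(j := y)) \<partial>lborel) \<partial>PiM I (\<lambda>_. lborel))"
      using I m by (rule product_nn_integral_insert)
    also have "\<dots> = (\<integral>\<^sup>+x. (\<integral>\<^sup>+T. ennreal (exp (- T)) * indicator (Sset I T) x * Q x T \<partial>lborel) \<partial>PiM I (\<lambda>_. lborel))"
    proof (rule nn_integral_cong)
      fix x :: "nat \<Rightarrow> real" assume x: "x \<in> space (PiM I (\<lambda>_. lborel))"
      have Qm: "Q x \<in> borel_measurable borel"
        unfolding Q_def pt_def using I by measurable
      have gm: "(\<lambda>y. wexp y * W I x * Q x (y + s x)) \<in> borel_measurable borel"
        using Qm by measurable
      have "(\<integral>\<^sup>+y. W (insert j I) (x(j := y)) * HH xs F (insert j I) (x(j := y)) \<partial>lborel)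
          = (\<integral>\<^sup>+y. wexp y * W I x * Q x (y + s x) \<partial>lborel)"
        using I x by (simp add: W_insert HQ)
      also have "\<dots> = ennreal \<bar>1\<bar> * (\<integral>\<^sup>+T. wexp (- s x + 1 * T) * W I x * Q x ((- s x + 1 * T) + s x) \<partial>lborel)"
        by (rule nn_integral_real_affine[OF gm]) simp
      also have "\<dots> = (\<integral>\<^sup>+T. ennreal (exp (- T)) * indicator (Sset I T) x * Q x T \<partial>lborel)"
      proof -
      have "(\<integral>\<^sup>+T. wexp (- s x + 1 * T) * W I x * Q x ((- s x + 1 * T) + s x) \<partial>lborel) = (\<integral>\<^sup>+T. ennreal (exp (- T)) * indicator (Sset I T) x * Q x T \<partial>lborel)"
      proof (intro nn_integral_cong)
        fix T :: real
        have "wexp (- s x + 1 * T) * W I x = ennreal (exp (- T)) * indicator (Sset I T) x"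
        proof -
          have "wexp (- s x + 1 * T) * W I x = ennreal (exp (s x - T)) * ennreal (exp (- s x)) * (indicator {0..} (T - s x) * indicator {x. \<forall>i\<in>I. 0 \<le> x i} x)"
            using I by (simp add: wexp_def W_expand s_def mult_ac)
          also have "ennreal (exp (s x - T)) * ennreal (exp (- s x)) = ennreal (exp (- T))"
            by (simp add: ennreal_mult[symmetric] exp_add[symmetric])
          also have "(indicator {0..} (T - s x) * indicator {x. \<forall>i\<in>I. 0 \<le> x i} x :: ennreal) = indicator (Sset I T) x"
            by (simp add: indicator_def Sset_def s_def)
          finally show ?thesis .
        qed
        then show "wexp (- s x + 1 * T) * W I x * Q x ((- s x + 1 * T) + s x) = ennreal (exp (- T)) * indicator (Sset I T) x * Q x T"
          by simp
      qed
      then show ?thesis by simp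
      qed
      finally show "(\<integral>\<^sup>+y. W (insert j I) (x(j := y)) * HH xs F (insert j I) (x(j := y)) \<partial>lborel) = (\<integral>\<^sup>+T. ennreal (exp (- T)) * indicator (Sset I T) x * Q x T \<partial>lborel)" .
    qed
    finally show ?thesis .
  qed
  also have "\<dots> = (\<integral>\<^sup>+T. (\<integral>\<^sup>+x. ennreal (exp (- T)) * indicator (Sset I T) x * Q x T \<partial>PiM I (\<lambda>_. lborel)) \<partial>lborel)"
  proof -
    interpret pair_sigma_finite "PiM I (\<lambda>_. lborel)" lborel by standard
    have "(\<lambda>(x, T). ennreal (exp (- T)) * indicator (Sset I T) x * Q x T) \<in> borel_measurable (PiM I (\<lambda>_. lborel) \<Otimes>\<^sub>M lborel)"
    proof -
      have e: "(\<lambda>(x, T). ennreal (exp (- T)) * indicator (Sset I T) x * Q x T) = 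
         (\<lambda>p. ennreal (exp (- snd p)) * (if (\<forall>i\<in>I. 0 \<le> fst p i) \<and> sum (fst p) I \<le> snd p then 1 else 0) * ennreal (snd p * F (pt xs j I (\<lambda>i. fst p i / snd p))))"
        by (auto simp: Sset_def Q_def indicator_def fun_eq_iff)
      show ?thesis unfolding e using I by measurable
    qed
    then show ?thesis by (rule Fubini'[symmetric])
  qed
  also have "\<dots> = (\<integral>\<^sup>+T. ennreal (T ^ (card I + 1) * exp (- T)) * indicator {0..} T * A \<partial>lborel)"
  proof (rule nn_integral_cong)
    fix T :: real
    consider "T < 0" | "T = 0" | "T > 0" by linarith
    then show "(\<integral>\<^sup>+x. ennreal (exp (- T)) * indicator (Sset I T) x * Q x T \<partial>PiM I (\<lambda>_. lborel)) = ennreal (T ^ (card I + 1) * exp (- T)) * indicator {0..} T * A"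
    proof cases
      case 1
      have "indicator (Sset I T) x = (0::ennreal)" for x :: "nat \<Rightarrow> real"
      proof -
        have "x \<notin> Sset I T"
        proof
          assume "x \<in> Sset I T"
          then have "0 \<le> sum x I" "sum x I \<le> T" unfolding Sset_def by (auto intro: sum_nonneg)
          then show False using 1 by linarith
        qed
        then show ?thesis by simp
      qed
      then show ?thesis using 1 by simp
    next
      case 2 then show ?thesis by (simp add: Q_def)
    next
      case 3
      have Qm: "(\<lambda>x. indicator (Sset I T) x * Q x T) \<in> borel_measurable (PiM I (\<lambda>_. lborel))"
      proof -
        have e: "(\<lambda>x. indicator (Sset I T) x * Q x T) = (\<lambda>x. (if (\<forall>i\<in>I. 0 \<le> x i) \<and> sum x I \<le> T then 1 else 0) * ennreal (T * F (pt xs j I (\<lambda>i. x i / T))))"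
          by (auto simp: Sset_def Q_def indicator_def fun_eq_iff)
        show ?thesis unfolding e pt_def using I by measurable
      qed
      have "(\<integral>\<^sup>+x. ennreal (exp (- T)) * indicator (Sset I T) x * Q x T \<partial>PiM I (\<lambda>_. lborel))
          = ennreal (exp (- T)) * (\<integral>\<^sup>+x. indicator (Sset I T) x * Q x T \<partial>PiM I (\<lambda>_. lborel))"
        using Qm by (simp add: nn_integral_cmult mult.assoc)
      also have "(\<integral>\<^sup>+x. indicator (Sset I T) x * Q x T \<partial>PiM I (\<lambda>_. lborel))
          = ennreal (T ^ card I) * (\<integral>\<^sup>+\<mu>. indicator (Sset I T) (restrict (\<lambda>i. T * \<mu> i) I) * Q (restrict (\<lambda>i. T * \<mu> i) I) T \<partial>PiM I (\<lambda>_. lborel))"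
        using scale_PiM[OF I(1) 3 Qm] by simp
      also have "(\<integral>\<^sup>+\<mu>. indicator (Sset I T) (restrict (\<lambda>i. T * \<mu> i) I) * Q (restrict (\<lambda>i. T * \<mu> i) I) T \<partial>PiM I (\<lambda>_. lborel))
          = (\<integral>\<^sup>+\<mu>. ennreal T * (indicator (Sset I 1) \<mu> * ennreal (F (pt xs j I \<mu>))) \<partial>PiM I (\<lambda>_. lborel))"
      proof (rule nn_integral_cong)
        fix \<mu> :: "nat \<Rightarrow> real"
        have i: "restrict (\<lambda>i. T * \<mu> i) I \<in> Sset I T \<longleftrightarrow> \<mu> \<in> Sset I 1"
        proof -
          have "sum (restrict (\<lambda>i. T * \<mu> i) I) I = T * sum \<mu> I"
            by (simp add: sum_distrib_left)
          then show ?thesis using 3 by (simp add: Sset_def zero_le_mult_iff)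
        qed
        have p: "pt xs j I (\<lambda>i. restrict (\<lambda>i. T * \<mu> i) I i / T) = pt xs j I \<mu>"
          unfolding pt_def using 3 by (intro arg_cong2[where f="(+)"] refl sum.cong) auto
        show "indicator (Sset I T) (restrict (\<lambda>i. T * \<mu> i) I) * Q (restrict (\<lambda>i. T * \<mu> i) I) T = ennreal T * (indicator (Sset I 1) \<mu> * ennreal (F (pt xs j I \<mu>)))"
          unfolding Q_def p using 3 Fnn by (simp add: i indicator_def ennreal_mult)
      qed
      also have "\<dots> = ennreal T * A"
        unfolding A_def
      proof (intro nn_integral_cmult borel_measurable_times_ennreal)
        have e: "indicator (Sset I 1) = (\<lambda>x::nat\<Rightarrow>real. if (\<forall>i\<in>I. 0 \<le> x i) \<and> sum x I \<le> 1 then 1 else (0::ennreal))"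
          by (auto simp: Sset_def indicator_def fun_eq_iff)
        show "indicator (Sset I 1) \<in> borel_measurable (PiM I (\<lambda>_. lborel))"
          using I by measurable
        show "(\<lambda>x. ennreal (F (pt xs j I x))) \<in> borel_measurable (PiM I (\<lambda>_. lborel))"
          using measurable_compose[OF pt_meas2[OF I(1)] F] by measurable
      qed
      finally show ?thesis using 3
        by (simp add: ennreal_mult[symmetric] mult_ac power_Suc)
    qed
  qed
  also have "\<dots> = ennreal (fact (card I + 1)) * A"
  proof -
    have e: "(\<integral>\<^sup>+T. ennreal (T ^ (card I + 1) * exp (- T)) * indicator {0..} T \<partial>lborel) = ennreal (fact (card I + 1))"
      using nn_intergal_power_times_exp_Ici[of "card I + 1"] by (simp only: of_nat_fact)
    have "(\<integral>\<^sup>+T. ennreal (T ^ (card I + 1) * exp (- T)) * indicator {0..} T * A \<partial>lborel)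
       = (\<integral>\<^sup>+T. ennreal (T ^ (card I + 1) * exp (- T)) * indicator {0..} T \<partial>lborel) * A"
      by (rule nn_integral_multc) measurable
    then show ?thesis unfolding e .
  qed
  finally show ?thesis unfolding A_def .
qed



lemma partition_sum:
  assumes K: "finite K" and P: "partition_on K P"
  shows "finite P" "\<And>L. L \<in> P \<Longrightarrow> finite L \<and> L \<subseteq> K \<and> L \<noteq> {}"
    "sum g K = (\<Sum>L\<in>P. sum g L)"
proof -
  have U: "\<Union>P = K" using P by (simp add: partition_on_def)
  show fP: "finite P" using K U by (metis finite_UnionD)
  show fL: "\<And>L. L \<in> P \<Longrightarrow> finite L \<and> L \<subseteq> K \<and> L \<noteq> {}"
    using K U P[THEN partition_onD3] by (auto intro: finite_subset)
  have d: "\<forall>A\<in>P. \<forall>B\<in>P. A \<noteq> B \<longrightarrow> A \<inter> B = {}"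
    using P[THEN partition_onD2] by (auto simp: disjoint_def)
  show "sum g K = (\<Sum>L\<in>P. sum g L)"
    unfolding U[symmetric] using fL d sum.Union_disjoint[of P g] by auto
qed

lemma HH_split:
  fixes xs :: "nat \<Rightarrow> 'a::real_vector"
  assumes K: "finite K" and P: "partition_on K P" and cv: "convex_on C F"
    and CK: "convex hull (xs ` K) \<subseteq> C" and Fnn: "\<And>y. 0 \<le> F y" and t: "\<And>i. i \<in> K \<Longrightarrow> 0 \<le> t i"
  shows "HH xs F K t \<le> (\<Sum>L\<in>P. HH xs F L t)"
proof -
  note PS = partition_sum[OF K P]
  define TT where "TT = (\<lambda>L. \<Sum>i\<in>L. t i)"
  define V where "V = (\<lambda>L. \<Sum>i\<in>L. t i *\<^sub>R xs i)"
  have TT: "TT K = (\<Sum>L\<in>P. TT L)" unfolding TT_def by (rule PS(3))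
  have VV: "V K = (\<Sum>L\<in>P. V L)" unfolding V_def by (rule PS(3))
  have TTnn: "L \<in> P \<Longrightarrow> 0 \<le> TT L" for L using PS(2)[of L] t unfolding TT_def by (auto intro!: sum_nonneg)
  have TTK: "0 \<le> TT K" using t unfolding TT_def by (auto intro!: sum_nonneg)
  have rhs: "(\<Sum>L\<in>P. HH xs F L t) = ennreal (\<Sum>L\<in>P. TT L * F (V L /\<^sub>R TT L))"
    unfolding HH_def TT_def[symmetric] V_def[symmetric] using TTnn Fnn
    by (subst sum_ennreal) auto
  show ?thesis
  proof (cases "TT K = 0")
    case True then show ?thesis unfolding HH_def TT_def[symmetric] by simp
  next
    case False
    then have Tpos: "0 < TT K" using TTK by simp
    define P' where "P' = {L\<in>P. TT L \<noteq> 0}"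
    have fP': "finite P'" using PS(1) by (simp add: P'_def)
    have zero: "L \<in> P - P' \<Longrightarrow> TT L = 0" for L by (simp add: P'_def)
    have Vzero: "L \<in> P - P' \<Longrightarrow> V L = 0" for L
    proof -
      assume L: "L \<in> P - P'"
      then have "\<forall>i\<in>L. t i = 0" using zero[OF L] PS(2)[of L] t unfolding TT_def
        by (subst sum_nonneg_eq_0_iff[symmetric]) auto
      then show ?thesis unfolding V_def by simp
    qed
    have TT': "TT K = (\<Sum>L\<in>P'. TT L)"
      unfolding TT P'_def using PS(1) by (intro sum.mono_neutral_right) auto
    have VV': "V K = (\<Sum>L\<in>P'. TT L *\<^sub>R (V L /\<^sub>R TT L))"
    proof -
      have "V K = (\<Sum>L\<in>P'. V L)"
        unfolding VV using PS(1) Vzero by (intro sum.mono_neutral_right) (auto simp: P'_def)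
      then show ?thesis by (simp add: P'_def)
    qed
    have ne: "P' \<noteq> {}" using TT' Tpos by auto
    have mem: "V L /\<^sub>R TT L \<in> C" if L: "L \<in> P'" for L
    proof -
      have Lp: "L \<in> P" "0 < TT L" using L TTnn[of L] by (auto simp: P'_def)
      have "V L /\<^sub>R TT L = (\<Sum>i\<in>L. (t i / TT L) *\<^sub>R xs i)"
        unfolding V_def by (simp add: scaleR_sum_right divide_inverse_commute)
      also have "\<dots> \<in> convex hull (xs ` L)"
      proof (rule convex_sum)
        show "finite L" using PS(2)[OF Lp(1)] by simp
        show "(\<Sum>i\<in>L. t i / TT L) = 1" using Lp(2) by (simp add: sum_divide_distrib[symmetric] TT_def)
        show "\<And>i. i \<in> L \<Longrightarrow> 0 \<le> t i / TT L" using Lp PS(2)[OF Lp(1)] t by auto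
        show "\<And>i. i \<in> L \<Longrightarrow> xs i \<in> convex hull (xs ` L)" by (simp add: hull_inc)
      qed simp
      also have "\<dots> \<subseteq> convex hull (xs ` K)" using PS(2)[OF Lp(1)] by (intro hull_mono) auto
      finally show ?thesis using CK by auto
    qed
    have "F (V K /\<^sub>R TT K) = F (\<Sum>L\<in>P'. (TT L / TT K) *\<^sub>R (V L /\<^sub>R TT L))"
      unfolding VV' scaleR_sum_right by (intro arg_cong[where f=F] sum.cong refl) (simp add: divide_inverse_commute mult_ac)
    also have "\<dots> \<le> (\<Sum>L\<in>P'. (TT L / TT K) * F (V L /\<^sub>R TT L))"
    proof (rule convex_on_sum[OF fP' ne cv])
      show "(\<Sum>L\<in>P'. TT L / TT K) = 1" using TT' Tpos by (simp add: sum_divide_distrib[symmetric])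
      show "\<And>L. L \<in> P' \<Longrightarrow> 0 \<le> TT L / TT K" using TTnn Tpos by (auto simp: P'_def)
      show "\<And>L. L \<in> P' \<Longrightarrow> V L /\<^sub>R TT L \<in> C" by (rule mem)
    qed
    finally have "TT K * F (V K /\<^sub>R TT K) \<le> TT K * (\<Sum>L\<in>P'. (TT L / TT K) * F (V L /\<^sub>R TT L))"
      using Tpos by (intro mult_left_mono) auto
    also have "\<dots> = (\<Sum>L\<in>P'. TT L * F (V L /\<^sub>R TT L))"
      using Tpos by (simp add: sum_distrib_left)
    also have "\<dots> = (\<Sum>L\<in>P. TT L * F (V L /\<^sub>R TT L))"
      using PS(1) zero by (intro sum.mono_neutral_left) (auto simp: P'_def)
    finally have "ennreal (TT K * F (V K /\<^sub>R TT K)) \<le> ennreal (\<Sum>L\<in>P. TT L * F (V L /\<^sub>R TT L))"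
      by (rule ennreal_leI)
    then show ?thesis unfolding HH_def TT_def[symmetric] V_def[symmetric] using TTnn Fnn
      by (subst sum_ennreal) auto
  qed
qed



lemma W_zero: "finite K \<Longrightarrow> \<not> (\<forall>i\<in>K. 0 \<le> t i) \<Longrightarrow> W K t = 0"
  by (simp add: W_expand)

lemma HH_restrict: "HH xs F L (restrict t L) = HH xs F L t"
  unfolding HH_def by simp

lemma part_int:
  fixes xs :: "nat \<Rightarrow> 'a::euclidean_space"
  assumes K: "finite K" and P: "partition_on K P" and cv: "convex_on C F"
    and CK: "convex hull (xs ` K) \<subseteq> C" and Fnn: "\<And>y. 0 \<le> F y" and Fm: "F \<in> borel_measurable borel"
  shows "(\<integral>\<^sup>+t. W K t * HH xs F K t \<partial>PiM K (\<lambda>_. lborel)) \<le> (\<Sum>L\<in>P. \<integral>\<^sup>+t. W L t * HH xs F L t \<partial>PiM L (\<lambda>_. lborel))"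
proof -
  note PS = partition_sum[OF K P]
  have "(\<integral>\<^sup>+t. W K t * HH xs F K t \<partial>PiM K (\<lambda>_. lborel)) \<le> (\<integral>\<^sup>+t. (\<Sum>L\<in>P. W K t * HH xs F L t) \<partial>PiM K (\<lambda>_. lborel))"
  proof (rule nn_integral_mono)
    fix t
    show "W K t * HH xs F K t \<le> (\<Sum>L\<in>P. W K t * HH xs F L t)"
    proof (cases "\<forall>i\<in>K. 0 \<le> t i")
      case True
      then have "HH xs F K t \<le> (\<Sum>L\<in>P. HH xs F L t)"
        by (intro HH_split[OF K P cv CK Fnn]) auto
      then show ?thesis by (simp add: sum_distrib_left[symmetric] mult_left_mono)
    qed (simp add: W_zero[OF K])
  qed
  also have "\<dots> = (\<Sum>L\<in>P. \<integral>\<^sup>+t. W K t * HH xs F L t \<partial>PiM K (\<lambda>_. lborel))"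
    using PS K Fm by (intro nn_integral_sum) (auto intro!: borel_measurable_times_ennreal W_measurable HH_meas)
  also have "\<dots> = (\<Sum>L\<in>P. \<integral>\<^sup>+t. W L t * HH xs F L t \<partial>PiM L (\<lambda>_. lborel))"
  proof (rule sum.cong[OF refl])
    fix L assume L: "L \<in> P"
    have "(\<integral>\<^sup>+t. W K t * HH xs F L t \<partial>PiM K (\<lambda>_. lborel)) = (\<integral>\<^sup>+t. W K t * HH xs F L (restrict t L) \<partial>PiM K (\<lambda>_. lborel))"
      by (simp add: HH_restrict)
    also have "\<dots> = (\<integral>\<^sup>+t. W L t * HH xs F L t \<partial>PiM L (\<lambda>_. lborel))"
      using PS(2)[OF L] K Fm by (intro restrict_W HH_meas) auto
    finally show "(\<integral>\<^sup>+t. W K t * HH xs F L t \<partial>PiM K (\<lambda>_. lborel)) = (\<integral>\<^sup>+t. W L t * HH xs F L t \<partial>PiM L (\<lambda>_. lborel))" .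
  qed
  finally show ?thesis .
qed



lemma face_point_in_hull:
  fixes xs :: "nat \<Rightarrow> 'a::real_vector"
  assumes K: "finite K" "K \<noteq> {}" and \<mu>: "\<mu> \<in> face_param_set K"
  shows "face_point xs K \<mu> \<in> convex hull (xs ` K)"
proof -
  define j where "j = Min K"
  define I where "I = K - {j}"
  have j: "j \<in> K" using K by (simp add: j_def)
  have KI: "K = insert j I" "j \<notin> I" "finite I" using j K by (auto simp: I_def)
  have \<mu>I: "\<forall>i\<in>I. 0 \<le> \<mu> i" "sum \<mu> I \<le> 1" using \<mu> by (auto simp: face_param_set_def I_def j_def Let_def)
  define w where "w = (\<lambda>i. if i = j then 1 - sum \<mu> I else \<mu> i)"
  have "face_point xs K \<mu> = (\<Sum>i\<in>K. w i *\<^sub>R xs i)"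
  proof -
    have "(\<Sum>i\<in>K. w i *\<^sub>R xs i) = (1 - sum \<mu> I) *\<^sub>R xs j + (\<Sum>i\<in>I. \<mu> i *\<^sub>R xs i)"
      unfolding KI(1) using KI by (simp add: w_def, intro sum.cong) auto
    moreover have "face_point xs K \<mu> = xs j + (\<Sum>i\<in>I. \<mu> i *\<^sub>R xs i) - (sum \<mu> I) *\<^sub>R xs j"
      unfolding face_point_def j_def[symmetric] I_def[symmetric]
      by (simp add: scaleR_diff_right sum_subtractf scaleR_sum_left)
    moreover have "xs j + (\<Sum>i\<in>I. \<mu> i *\<^sub>R xs i) - (sum \<mu> I) *\<^sub>R xs j = (1 - sum \<mu> I) *\<^sub>R xs j + (\<Sum>i\<in>I. \<mu> i *\<^sub>R xs i)"
      by (simp add: scaleR_diff_left)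
    ultimately show ?thesis by simp
  qed
  also have "\<dots> \<in> convex hull (xs ` K)"
  proof (rule convex_sum)
    show "sum w K = 1" unfolding KI(1) using KI by (simp add: w_def, subst sum.cong[OF refl, of I _ \<mu>]) auto
    show "\<And>i. i \<in> K \<Longrightarrow> 0 \<le> w i" using \<mu>I KI by (auto simp: w_def)
  qed (use K in \<open>auto simp: hull_inc\<close>)
  finally show ?thesis .
qed

lemma avg_formula:
  fixes xs :: "nat \<Rightarrow> 'a::euclidean_space" and f F :: "'a \<Rightarrow> real"
  assumes K: "finite K" "K \<noteq> {}" and KD: "convex hull (xs ` K) \<subseteq> D"
    and FD: "\<And>y. y \<in> D \<Longrightarrow> F y = f y + B"
    and Fm: "F \<in> borel_measurable borel" and Fnn: "\<And>y. 0 \<le> F y" and Fb: "\<And>y. F y \<le> M"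
  shows "(\<integral>\<^sup>+t. W K t * HH xs F K t \<partial>PiM K (\<lambda>_. lborel)) < \<infinity>"
    and "real (card K) * Avg_face f xs K = enn2real (\<integral>\<^sup>+t. W K t * HH xs F K t \<partial>PiM K (\<lambda>_. lborel)) - real (card K) * B"
proof -
  define j where "j = Min K"
  define I where "I = K - {j}"
  have j: "j \<in> K" using K by (simp add: j_def)
  have KI: "K = insert j I" "j \<notin> I" "finite I" using j K by (auto simp: I_def)
  have cK: "card K = card I + 1" using KI by simp
  let ?M = "PiM I (\<lambda>_. lborel)"
  define A where "A = face_param_set K"
  have A: "A = Sset I 1 \<inter> space ?M"
    by (auto simp: A_def face_param_set_def Sset_def I_def j_def Let_def space_PiM)
  have fp: "face_point xs K = pt xs j I"
    by (simp add: fun_eq_iff face_point_def pt_def I_def j_def)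
  have Am[measurable]: "A \<in> sets ?M" unfolding A using KI by measurable
  have emA: "emeasure ?M A = ennreal (1 / fact (card I))"
    unfolding A Sset_def using emeasure_std_simplex_aux[OF KI(3), of 1] by simp
  have mA: "measure ?M A = 1 / fact (card I)"
    using emA by (simp add: measure_def)
  have inD: "\<mu> \<in> A \<Longrightarrow> pt xs j I \<mu> \<in> D" for \<mu>
    using face_point_in_hull[OF K, of \<mu> xs] KD by (auto simp: A_def fp)
  have Fpm[measurable]: "(\<lambda>\<mu>. F (pt xs j I \<mu>)) \<in> borel_measurable ?M"
    using measurable_compose[OF pt_meas2[OF KI(3)] Fm] .
  define X where "X = (\<integral>\<^sup>+\<mu>. indicator (Sset I 1) \<mu> * ennreal (F (pt xs j I \<mu>)) \<partial>?M)"
  have X: "X = (\<integral>\<^sup>+\<mu>. ennreal (indicator A \<mu> * F (pt xs j I \<mu>)) \<partial>?M)"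
    unfolding X_def A by (intro nn_integral_cong) (auto simp: indicator_def)
  have Xle: "X \<le> ennreal M * ennreal (1 / fact (card I))"
  proof -
    have "X \<le> (\<integral>\<^sup>+\<mu>. ennreal M * indicator A \<mu> \<partial>?M)"
      unfolding X by (intro nn_integral_mono) (auto simp: indicator_def Fb ennreal_leI)
    also have "\<dots> = ennreal M * emeasure ?M A" by (simp add: nn_integral_cmult_indicator)
    finally show ?thesis using emA by simp
  qed
  then have Xfin: "X < \<infinity>" by (auto simp: top_unique ennreal_mult_less_top intro: le_less_trans)
  have core': "(\<integral>\<^sup>+t. W K t * HH xs F K t \<partial>PiM K (\<lambda>_. lborel)) = ennreal (fact (card I + 1)) * X"
    unfolding X_def KI(1) using core[OF KI(3) KI(2) Fm Fnn] by simp
  show "(\<integral>\<^sup>+t. W K t * HH xs F K t \<partial>PiM K (\<lambda>_. lborel)) < \<infinity>"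
    unfolding core' using Xfin by (simp add: ennreal_mult_less_top)
  have intF: "integrable ?M (\<lambda>\<mu>. indicator A \<mu> * F (pt xs j I \<mu>))"
  proof (rule integrableI_bounded)
    show "(\<lambda>\<mu>. indicator A \<mu> * F (pt xs j I \<mu>)) \<in> borel_measurable ?M" by measurable
    have "(\<integral>\<^sup>+\<mu>. ennreal (norm (indicator A \<mu> * F (pt xs j I \<mu>))) \<partial>?M) = X"
      unfolding X using Fnn by (intro nn_integral_cong) (auto simp: indicator_def)
    then show "(\<integral>\<^sup>+\<mu>. ennreal (norm (indicator A \<mu> * F (pt xs j I \<mu>))) \<partial>?M) < \<infinity>" using Xfin by simp
  qed
  have intB: "integrable ?M (\<lambda>\<mu>. indicator A \<mu> * B)"
    using emA by (intro integrable_mult_left integrable_real_indicator) auto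
  have "(LINT \<mu>:A|?M. f (face_point xs K \<mu>)) = (LINT \<mu>|?M. indicator A \<mu> * F (pt xs j I \<mu>) - indicator A \<mu> * B)"
    unfolding set_lebesgue_integral_def fp
    by (intro Bochner_Integration.integral_cong refl) (auto simp: indicator_def FD inD)
  also have "\<dots> = (LINT \<mu>|?M. indicator A \<mu> * F (pt xs j I \<mu>)) - B * measure ?M A"
    using intF intB by (simp add: Bochner_Integration.integral_diff)
  also have "(LINT \<mu>|?M. indicator A \<mu> * F (pt xs j I \<mu>)) = enn2real X"
    unfolding X using Fnn by (intro integral_eq_nn_integral) (auto simp: indicator_def)
  finally have LI: "(LINT \<mu>:A|?M. f (face_point xs K \<mu>)) = enn2real X - B / fact (card I)"
    by (simp add: mA)
  have Av: "Avg_face f xs K = fact (card I) * enn2real X - B"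
    unfolding Avg_face_def A_def[symmetric] face_param_measure_def I_def[symmetric] j_def[symmetric]
    unfolding I_def[symmetric] j_def[symmetric] LI mA by (simp add: field_simps)
  show "real (card K) * Avg_face f xs K = enn2real (\<integral>\<^sup>+t. W K t * HH xs F K t \<partial>PiM K (\<lambda>_. lborel)) - real (card K) * B"
  proof -
    have "enn2real (ennreal (fact (card I + 1)) * X) = fact (card I + 1) * enn2real X"
      by (simp only: enn2real_mult) simp
    also have "(fact (card I + 1) :: real) = (real (card I) + 1) * fact (card I)"
      by simp
    finally show ?thesis unfolding core' Av cK by (simp add: algebra_simps)
  qed
qed



lemma convex_ri_bound:
  fixes S :: "'a::euclidean_space set"
  assumes cv: "convex_on S f" and M: "\<And>y. y \<in> S \<Longrightarrow> f y \<le> M"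
    and x: "x \<in> S" and r: "r > 0" "ball x r \<inter> affine hull S \<subseteq> S"
    and y: "y \<in> S" and d: "dist y x < r / 2"
  shows "\<bar>f y - f x\<bar> \<le> 2 * dist y x / r * (M - f x)"
proof (cases "y = x")
  case True then show ?thesis using M[OF x] r by simp
next
  case False
  define \<delta> where "\<delta> = dist y x"
  define t where "t = 2 * \<delta> / r"
  have \<delta>: "0 < \<delta>" "\<delta> < r / 2" using False d by (auto simp: \<delta>_def)
  have t: "0 < t" "t < 1" using \<delta> r by (auto simp: t_def field_simps)
  have aff: "affine (affine hull S)" by simp
  have xa: "x \<in> affine hull S" and ya: "y \<in> affine hull S" using x y by (auto intro: hull_inc)
  have nyx: "norm (y - x) = \<delta>" by (simp add: \<delta>_def dist_norm)
  define z where "z = (1 - 1/t) *\<^sub>R x + (1/t) *\<^sub>R y"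
  define w where "w = (1 + 1/t) *\<^sub>R x + (- 1/t) *\<^sub>R y"
  have z_eq: "z - x = (1/t) *\<^sub>R (y - x)" by (simp add: z_def algebra_simps)
  have w_eq: "w - x = (- 1/t) *\<^sub>R (y - x)" by (simp add: w_def algebra_simps)
  have nz: "dist z x = r / 2" unfolding dist_norm z_eq using t r \<delta> by (simp add: nyx t_def)
  have nw: "dist w x = r / 2" unfolding dist_norm w_eq using t r \<delta> by (simp add: nyx t_def)
  have zS: "z \<in> S"
  proof -
    have "z \<in> affine hull S" unfolding z_def by (rule mem_affine[OF aff xa ya]) simp
    moreover have "z \<in> ball x r" using nz r by (simp add: dist_commute)
    ultimately show ?thesis using r by auto
  qed
  have wS: "w \<in> S"
  proof -
    have "w \<in> affine hull S" unfolding w_def by (rule mem_affine[OF aff xa ya]) simp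
    moreover have "w \<in> ball x r" using nw r by (simp add: dist_commute)
    ultimately show ?thesis using r by auto
  qed
  have y_eq: "y = (1 - t) *\<^sub>R x + t *\<^sub>R z"
    using t by (simp add: z_def algebra_simps)
  have x_eq: "x = (1 - t / (1 + t)) *\<^sub>R y + (t / (1 + t)) *\<^sub>R w"
  proof -
    have nz: "1 + t \<noteq> 0" "t \<noteq> 0" "t + t * t \<noteq> 0"
    proof -
      have "0 < t * t" using t by simp
      then show "1 + t \<noteq> 0" "t \<noteq> 0" "t + t * t \<noteq> 0" using t by linarith+
    qed
    have c1: "(t / (1 + t)) * (1 + 1/t) = 1" "(t / (1 + t)) * (- 1/t) = - (1 / (1 + t))" "1 - t / (1 + t) = 1 / (1 + t)"
      using nz by (simp_all add: field_simps)
    have "(t / (1 + t)) *\<^sub>R w = x - (1 / (1 + t)) *\<^sub>R y"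
      unfolding w_def scaleR_add_right scaleR_scaleR c1 by simp
    then show ?thesis unfolding c1 by simp
  qed
  have up0: "f ((1 - t) *\<^sub>R x + t *\<^sub>R z) \<le> (1 - t) * f x + t * f z"
    by (rule convex_onD[OF cv]) (use t x zS in auto)
  have a: "0 \<le> t / (1 + t)" "t / (1 + t) \<le> 1" using t by auto
  have lo0: "f ((1 - t / (1 + t)) *\<^sub>R y + (t / (1 + t)) *\<^sub>R w) \<le> (1 - t / (1 + t)) * f y + (t / (1 + t)) * f w"
    by (rule convex_onD[OF cv a y wS])
  have up: "f y \<le> (1 - t) * f x + t * f z" using up0 y_eq by simp
  have lo: "f x \<le> (1 - t / (1 + t)) * f y + (t / (1 + t)) * f w" using lo0 x_eq by simp
  have tz: "t * f z \<le> t * M" using M[OF zS] t by (intro mult_left_mono) auto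
  have tw: "t * f w \<le> t * M" using M[OF wS] t by (intro mult_left_mono) auto
  have e1: "(1 - t) * f x = f x - t * f x" by (simp add: algebra_simps)
  have "f y - f x \<le> t * M - t * f x" using up tz e1 by linarith
  moreover have "f x - f y \<le> t * M - t * f x"
  proof -
    have "(1 + t) * f x \<le> (1 + t) * ((1 - t / (1 + t)) * f y + (t / (1 + t)) * f w)"
      using lo t by (intro mult_left_mono) auto
    also have "\<dots> = ((1 + t) - (1 + t) * (t / (1 + t))) * f y + ((1 + t) * (t / (1 + t))) * f w"
      by (simp add: algebra_simps)
    also have "(1 + t) * (t / (1 + t)) = t" using t by simp
    also have "(1 + t) - t = 1" by simp
    finally have "(1 + t) * f x \<le> 1 * f y + t * f w" .
    then have "(1 + t) * f x \<le> f y + t * f w" by simp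
    moreover have "(1 + t) * f x = f x + t * f x" by (simp add: algebra_simps)
    ultimately show ?thesis using tw by linarith
  qed
  ultimately have "\<bar>f y - f x\<bar> \<le> t * (M - f x)" by (simp add: algebra_simps abs_le_iff)
  then show ?thesis unfolding t_def \<delta>_def by simp
qed

lemma convex_on_ri_continuous:
  fixes S :: "'a::euclidean_space set"
  assumes cv: "convex_on S f" and M: "\<And>y. y \<in> S \<Longrightarrow> f y \<le> M"
  shows "continuous_on (rel_interior S) f"
  unfolding continuous_on_iff
proof (intro ballI allI impI)
  fix x e assume x: "x \<in> rel_interior S" and e: "(0::real) < e"
  obtain r where xS: "x \<in> S" and r: "r > 0" "ball x r \<inter> affine hull S \<subseteq> S"
    using x by (auto simp: mem_rel_interior_ball)
  define c where "c = M - f x"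
  have c: "0 \<le> c" using M[OF xS] by (simp add: c_def)
  define d where "d = min (r / 2) (e * r / (2 * c + 2))"
  have d: "0 < d" using r e c by (simp add: d_def)
  show "\<exists>d>0. \<forall>x'\<in>rel_interior S. dist x' x < d \<longrightarrow> dist (f x') (f x) < e"
  proof (intro exI conjI ballI impI)
    show "0 < d" by (rule d)
    fix y assume y: "y \<in> rel_interior S" and dy: "dist y x < d"
    have yS: "y \<in> S" using y rel_interior_subset by auto
    have d1: "dist y x < r / 2" and d2: "dist y x < e * r / (2 * c + 2)" using dy by (auto simp: d_def)
    have b: "\<bar>f y - f x\<bar> \<le> 2 * dist y x / r * c"
      unfolding c_def by (rule convex_ri_bound[OF cv M xS r yS d1])
    have "2 * dist y x * c \<le> 2 * (e * r / (2 * c + 2)) * c"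
      using d2 c by (intro mult_right_mono) auto
    also have "2 * (e * r / (2 * c + 2)) * c = e * r * (c / (c + 1))"
      using c by (simp add: field_simps)
    also have "\<dots> < e * r * 1"
      using c e r by (intro mult_strict_left_mono) auto
    finally have "2 * dist y x * c < e * r" by simp
    then have "2 * dist y x * c / r < e" using r by (simp add: pos_divide_less_eq)
    then have "2 * dist y x / r * c < e" using r by simp
    then show "dist (f y) (f x) < e" using b by (simp add: dist_real_def)
  qed
qed

lemma convex_hull_upper:
  fixes X :: "'a::real_vector set"
  assumes X: "finite X" and cv: "convex_on (convex hull X) f" and y: "y \<in> convex hull X"
  shows "f y \<le> Max (f ` X)"
proof -
  obtain u where u: "\<forall>v\<in>X. 0 \<le> u v" "sum u X = 1" "(\<Sum>v\<in>X. u v *\<^sub>R v) = y"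
    using y X by (auto simp: convex_hull_finite)
  have ne: "X \<noteq> {}" using u(2) by auto
  have "f y = f (\<Sum>v\<in>X. u v *\<^sub>R id v)" using u by simp
  also have "\<dots> \<le> (\<Sum>v\<in>X. u v * f (id v))"
    by (rule convex_on_sum[OF X ne cv]) (use u in \<open>auto intro: hull_inc\<close>)
  also have "\<dots> \<le> (\<Sum>v\<in>X. u v * Max (f ` X))"
    using u X by (intro sum_mono mult_left_mono) auto
  also have "\<dots> = Max (f ` X)" using u by (simp add: sum_distrib_right[symmetric])
  finally show ?thesis .
qed

lemma convex_hull_lower:
  fixes X :: "'a::real_vector set"
  assumes X: "finite X" "X \<noteq> {}" and cv: "convex_on (convex hull X) f"
  shows "\<exists>L. \<forall>y\<in>convex hull X. L \<le> f y"
proof -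
  define n where "n = real (card X)"
  have n: "n \<ge> 1" using X by (simp add: n_def Suc_le_eq card_gt_0_iff)
  define \<alpha> where "\<alpha> = 1 / (n + 1)"
  have \<alpha>: "0 < \<alpha>" "\<alpha> < 1" "\<alpha> \<le> 1 / n" using n by (auto simp: \<alpha>_def field_simps)
  define c where "c = (\<Sum>v\<in>X. (1 / n) *\<^sub>R v)"
  define Mx where "Mx = Max (f ` X)"
  have cX: "c \<in> convex hull X"
    unfolding c_def using X n by (intro convex_sum) (auto simp: n_def hull_inc)
  show ?thesis
  proof (intro exI ballI)
    fix y assume y: "y \<in> convex hull X"
    obtain u where u: "\<forall>v\<in>X. 0 \<le> u v" "sum u X = 1" "(\<Sum>v\<in>X. u v *\<^sub>R v) = y"
      using y X by (auto simp: convex_hull_finite)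
    have u1: "v \<in> X \<Longrightarrow> u v \<le> 1" for v
      using u X member_le_sum[of v X u] by auto
    define w where "w = (\<lambda>v. (1 / n - \<alpha> * u v) / (1 - \<alpha>))"
    define q where "q = (\<Sum>v\<in>X. w v *\<^sub>R v)"
    have w0: "v \<in> X \<Longrightarrow> 0 \<le> w v" for v
    proof -
      assume v: "v \<in> X"
      have "\<alpha> * u v \<le> \<alpha> * 1" using u1[OF v] \<alpha> by (intro mult_left_mono) auto
      then have "\<alpha> * u v \<le> 1 / n" using \<alpha> by linarith
      then show ?thesis using \<alpha> unfolding w_def by (intro divide_nonneg_pos) auto
    qed
    have sw: "sum w X = 1"
    proof -
      have "sum w X = (\<Sum>v\<in>X. 1 / n - \<alpha> * u v) / (1 - \<alpha>)" unfolding w_def by (simp add: sum_divide_distrib)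
      also have "(\<Sum>v\<in>X. 1 / n - \<alpha> * u v) = 1 - \<alpha>"
        using n u by (simp add: sum_subtractf sum_distrib_left[symmetric] n_def)
      finally show ?thesis using \<alpha> by simp
    qed
    have qX: "q \<in> convex hull X" unfolding q_def using X w0 sw by (intro convex_sum) (auto simp: hull_inc)
    have c_eq: "c = (1 - \<alpha>) *\<^sub>R q + \<alpha> *\<^sub>R y"
    proof -
      have "(1 - \<alpha>) *\<^sub>R q = (\<Sum>v\<in>X. (1 / n - \<alpha> * u v) *\<^sub>R v)"
        unfolding q_def w_def scaleR_sum_right scaleR_scaleR using \<alpha> by simp
      also have "\<dots> = c - \<alpha> *\<^sub>R y"
        unfolding c_def u(3)[symmetric] scaleR_sum_right scaleR_scaleR
        by (simp add: scaleR_diff_left sum_subtractf)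
      finally show ?thesis by simp
    qed
    have "f c \<le> (1 - \<alpha>) * f q + \<alpha> * f y"
      unfolding c_eq by (rule convex_onD[OF cv]) (use \<alpha> qX y in auto)
    also have "(1 - \<alpha>) * f q \<le> (1 - \<alpha>) * Mx"
      using convex_hull_upper[OF X(1) cv qX] \<alpha> by (intro mult_left_mono) (auto simp: Mx_def)
    finally have "f c - (1 - \<alpha>) * Mx \<le> \<alpha> * f y" by simp
    then show "(f c - (1 - \<alpha>) * Mx) / \<alpha> \<le> f y" using \<alpha> by (simp add: pos_divide_le_eq mult.commute)
  qed
qed

lemma indicator_union_meas:
  fixes S :: "'b \<Rightarrow> 'a::euclidean_space set" and f :: "'a \<Rightarrow> real"
  assumes "finite A" "\<And>a. a \<in> A \<Longrightarrow> S a \<in> sets borel"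
    "\<And>a. a \<in> A \<Longrightarrow> (\<lambda>y. indicator (S a) y * f y) \<in> borel_measurable borel"
  shows "(\<lambda>y. indicator (\<Union>a\<in>A. S a) y * f y) \<in> borel_measurable borel"
  using assms
proof (induction A rule: finite_induct)
  case empty then show ?case by simp
next
  case (insert a A)
  define U where "U = (\<Union>a\<in>A. S a)"
  have Ub: "U \<in> sets borel" unfolding U_def using insert by auto
  have m1: "(\<lambda>y. indicator U y * f y) \<in> borel_measurable borel" unfolding U_def using insert by auto
  have m2: "(\<lambda>y. indicator (S a) y * f y) \<in> borel_measurable borel" using insert by auto
  have Sb: "S a \<in> sets borel" using insert by auto
  have e: "(\<lambda>y. indicator (\<Union>a\<in>insert a A. S a) y * f y) = (\<lambda>y. indicator (S a) y * f y + (indicator U y * f y) - indicator (S a) y * (indicator U y * f y))"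
    by (auto simp: U_def indicator_def fun_eq_iff)
  have m3: "(\<lambda>y. indicator (S a) y * (indicator U y * f y)) \<in> borel_measurable borel"
    by (rule borel_measurable_times[OF borel_measurable_indicator[OF Sb] m1])
  show ?case unfolding e by (rule borel_measurable_diff[OF borel_measurable_add[OF m2 m1] m3])
qed

lemma convex_simplex_meas:
  fixes X :: "'a::euclidean_space set"
  assumes "\<not> affine_dependent X" "convex_on (convex hull X) f"
  shows "(\<lambda>y. indicator (convex hull X) y * f y) \<in> borel_measurable borel"
  using assms
proof (induction "card X" arbitrary: X rule: less_induct)
  case (less X)
  have X: "finite X" using less.prems aff_independent_finite by blast
  show ?case
  proof (cases "X = {}")
    case True then show ?thesis by simp
  next
    case False
    define B where "B = (\<Union>a\<in>X. convex hull (X - {a}))"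
    have hb: "convex hull X \<in> sets borel"
      using X by (intro borel_closed compact_imp_closed finite_imp_compact_convex_hull)
    have hbs: "convex hull (X - {a}) \<in> sets borel" for a
      using X by (intro borel_closed compact_imp_closed finite_imp_compact_convex_hull) auto
    have Bb: "B \<in> sets borel" unfolding B_def using X hbs by auto
    have ri: "rel_interior (convex hull X) = convex hull X - B"
      using rel_boundary_of_convex_hull[OF less.prems(1)] rel_interior_subset[of "convex hull X"]
      unfolding B_def by blast
    have rib: "rel_interior (convex hull X) \<in> sets borel" unfolding ri using hb Bb by auto
    have mB: "(\<lambda>y. indicator B y * f y) \<in> borel_measurable borel"
      unfolding B_def
    proof (rule indicator_union_meas[OF X hbs])
      fix a assume a: "a \<in> X"
      show "(\<lambda>y. indicator (convex hull (X - {a})) y * f y) \<in> borel_measurable borel"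
      proof (rule less.hyps)
        show "card (X - {a}) < card X" by (rule card_Diff1_less[OF X a])
        show "\<not> affine_dependent (X - {a})" using less.prems(1) by (rule affine_independent_subset) auto
        show "convex_on (convex hull (X - {a})) f"
          using less.prems(2) by (rule convex_on_subset) (auto intro: hull_mono[of "X - {a}" X, THEN subsetD])
      qed
    qed
    have cont: "continuous_on (rel_interior (convex hull X)) f"
      using convex_on_ri_continuous[OF less.prems(2) convex_hull_upper[OF X less.prems(2)]] .
    have "f \<in> borel_measurable (restrict_space borel (rel_interior (convex hull X)))"
      using borel_measurable_continuous_on_restrict[OF cont] .
    then have mri: "(\<lambda>y. indicator (rel_interior (convex hull X)) y *\<^sub>R f y) \<in> borel_measurable borel"
      using rib by (subst borel_measurable_restrict_space_iff[symmetric]) auto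
    have e: "(\<lambda>y. indicator (convex hull X) y * f y) = (\<lambda>y. indicator (rel_interior (convex hull X)) y *\<^sub>R f y + indicator B y * f y)"
      unfolding ri by (auto simp: indicator_def fun_eq_iff B_def dest: hull_mono[of "X - _" X, THEN subsetD, rotated])
    show ?thesis unfolding e using mri mB by (rule borel_measurable_add)
  qed
qed



lemma avg_singleton: "Avg_face f xs {i} = f (xs i)"
proof -
  have fps: "face_param_set {i} = {\<lambda>_. undefined}"
    by (auto simp: face_param_set_def Let_def PiE_def extensional_def)
  have fpm: "face_param_measure {i} = count_space {\<lambda>_. undefined}"
    by (simp add: face_param_measure_def PiM_empty)
  have fp: "face_point xs {i} \<mu> = xs i" for \<mu> by (simp add: face_point_def)
  show ?thesis unfolding Avg_face_def fps fpm fp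
    by (simp add: set_lebesgue_integral_def lebesgue_integral_count_space_finite measure_def)
qed

theorem corollary3:
  fixes x :: "nat \<Rightarrow> real ^ 'n"
    and f :: "real ^ 'n \<Rightarrow> real"
    and P :: "nat set set"
  assumes "inj_on x {0..CARD('n)}"
    and "\<not> affine_dependent (x ` {0..CARD('n)})"
    and "convex_on (convex hull (x ` {0..CARD('n)})) f"
    and "partition_on {0..CARD('n)} P"
  shows "real (CARD('n) + 1) * Avg_face f x {0..CARD('n)}
           \<le> (\<Sum>K\<in>P. real (card K) * Avg_face f x K)
         \<and> (\<Sum>K\<in>P. real (card K) * Avg_face f x K) \<le> (\<Sum>i\<in>{0..CARD('n)}. f (x i))"
proof -
  define N where "N = {0..CARD('n)}"
  define D where "D = convex hull (x ` N)"
  have fN: "finite N" "N \<noteq> {}" by (auto simp: N_def)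
  have cv: "convex_on D f" using assms(3) by (simp add: D_def N_def)
  have P: "partition_on N P" using assms(4) by (simp add: N_def)
  obtain L0 where L0: "\<And>y. y \<in> D \<Longrightarrow> L0 \<le> f y"
    using convex_hull_lower[of "x ` N" f] fN cv unfolding D_def by auto
  define Mx where "Mx = Max (f ` x ` N)"
  have Mx: "\<And>y. y \<in> D \<Longrightarrow> f y \<le> Mx"
    unfolding Mx_def D_def using fN cv by (intro convex_hull_upper) (auto simp: D_def)
  define B where "B = - L0"
  define F where "F = (\<lambda>y. if y \<in> D then f y + B else 0)"
  have Fnn: "\<And>y. 0 \<le> F y" using L0 by (simp add: F_def B_def)
  have Fb: "\<And>y. F y \<le> \<bar>Mx\<bar> + \<bar>B\<bar>"
  proof -
    fix y show "F y \<le> \<bar>Mx\<bar> + \<bar>B\<bar>"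
    proof (cases "y \<in> D")
      case True then have "f y \<le> Mx" by (rule Mx)
      then show ?thesis using True by (simp add: F_def)
    qed (simp add: F_def)
  qed
  have FD: "\<And>y. y \<in> D \<Longrightarrow> F y = f y + B" by (simp add: F_def)
  have Fm: "F \<in> borel_measurable borel"
  proof -
    have m1: "(\<lambda>y. indicator D y * f y) \<in> borel_measurable borel"
      unfolding D_def N_def using assms(2,3) by (rule convex_simplex_meas)
    have Db: "D \<in> sets borel" unfolding D_def using fN
      by (intro borel_closed compact_imp_closed finite_imp_compact_convex_hull) auto
    have e: "F = (\<lambda>y. indicator D y * f y + indicator D y * B)"
      by (auto simp: F_def fun_eq_iff indicator_def)
    show ?thesis unfolding e
      by (rule borel_measurable_add[OF m1 borel_measurable_times[OF borel_measurable_indicator[OF Db] borel_measurable_const]])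
  qed
  have cvD: "convex D" unfolding D_def by simp
  have cvF: "convex_on D F"
    unfolding convex_on_def
  proof (intro conjI cvD ballI allI impI)
    fix a b :: "real ^ 'n" and u v :: real assume ab: "a \<in> D" "b \<in> D" and uv: "0 \<le> u" "0 \<le> v" "u + v = 1"
    have "u *\<^sub>R a + v *\<^sub>R b \<in> D" using cvD ab uv by (simp add: convex_def)
    moreover have "f (u *\<^sub>R a + v *\<^sub>R b) \<le> u * f a + v * f b"
      using cv ab uv by (auto simp: convex_on_def)
    ultimately show "F (u *\<^sub>R a + v *\<^sub>R b) \<le> u * F a + v * F b"
    proof -
      have "u * (f a + B) + v * (f b + B) = u * f a + v * f b + (u + v) * B" by (simp add: algebra_simps)
      then have "u * F a + v * F b = u * f a + v * f b + B" using ab uv by (simp add: F_def)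
      moreover have "F (u *\<^sub>R a + v *\<^sub>R b) = f (u *\<^sub>R a + v *\<^sub>R b) + B"
        using \<open>u *\<^sub>R a + v *\<^sub>R b \<in> D\<close> by (simp add: F_def)
      ultimately show ?thesis using \<open>f (u *\<^sub>R a + v *\<^sub>R b) \<le> u * f a + v * f b\<close> by linarith
    qed
  qed
  define II where "II = (\<lambda>K. \<integral>\<^sup>+t. W K t * HH x F K t \<partial>PiM K (\<lambda>_. lborel))"
  define R where "R = (\<lambda>K. enn2real (II K))"
  have sub: "K \<subseteq> N \<Longrightarrow> convex hull (x ` K) \<subseteq> D" for K
    unfolding D_def by (intro hull_mono) auto
  have AF: "K \<subseteq> N \<Longrightarrow> K \<noteq> {} \<Longrightarrow> II K < \<infinity> \<and> real (card K) * Avg_face f x K = R K - real (card K) * B" for K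
  proof -
    assume K: "K \<subseteq> N" "K \<noteq> {}"
    have fK: "finite K" using K(1) fN(1) by (rule finite_subset)
    note af = avg_formula[of K x D F f B "\<bar>Mx\<bar> + \<bar>B\<bar>", OF fK K(2) sub[OF K(1)] FD Fm Fnn Fb]
    show ?thesis unfolding II_def R_def using af by blast
  qed
  have sumR: "enn2real (\<Sum>L\<in>Q. J L) = (\<Sum>L\<in>Q. enn2real (J L))"
    if "\<And>L. L \<in> Q \<Longrightarrow> J L < \<infinity>" for Q :: "'b set" and J :: "'b \<Rightarrow> ennreal"
  proof -
    have "(\<Sum>L\<in>Q. J L) = (\<Sum>L\<in>Q. ennreal (enn2real (J L)))"
      using that by (intro sum.cong refl) (simp add: ennreal_enn2real less_top)
    also have "\<dots> = ennreal (\<Sum>L\<in>Q. enn2real (J L))" by (rule sum_ennreal) simp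
    finally show ?thesis by (simp add: sum_nonneg)
  qed
  note PS = partition_sum[OF fN(1) P]
  have cN: "card N = CARD('n) + 1" by (simp add: N_def)
  have cardP: "real (card N) = (\<Sum>L\<in>P. real (card L))"
    using PS(3)[of "\<lambda>_. 1::real"] by simp
  have finL: "L \<in> P \<Longrightarrow> II L < \<infinity>" for L using AF PS(2) by blast
  have "II N \<le> (\<Sum>L\<in>P. II L)"
    unfolding II_def by (rule part_int[OF fN(1) P cvF _ Fnn Fm]) (simp add: D_def)
  then have RN: "R N \<le> (\<Sum>L\<in>P. R L)"
    unfolding R_def using finL PS(1) by (subst sumR[symmetric]) (auto intro!: enn2real_mono simp: less_top)
  have first: "real (card N) * Avg_face f x N \<le> (\<Sum>L\<in>P. real (card L) * Avg_face f x L)"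
  proof -
    have "real (card N) * Avg_face f x N = R N - real (card N) * B" using AF[of N] fN by simp
    also have "\<dots> \<le> (\<Sum>L\<in>P. R L) - (\<Sum>L\<in>P. real (card L)) * B" using RN cardP by simp
    also have "\<dots> = (\<Sum>L\<in>P. R L - real (card L) * B)" by (simp add: sum_subtractf sum_distrib_right)
    also have "\<dots> = (\<Sum>L\<in>P. real (card L) * Avg_face f x L)"
      using AF PS(2) by (intro sum.cong refl) auto
    finally show ?thesis .
  qed
  have blk: "real (card L) * Avg_face f x L \<le> (\<Sum>i\<in>L. f (x i))" if L: "L \<in> P" for L
  proof -
    have LN: "finite L" "L \<subseteq> N" "L \<noteq> {}" using PS(2)[OF L] by auto
    have sing: "i \<in> L \<Longrightarrow> R {i} = f (x i) + B" for i
      using AF[of "{i}"] LN by (auto simp: avg_singleton)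
    have sfin: "i \<in> L \<Longrightarrow> II {i} < \<infinity>" for i using AF[of "{i}"] LN by auto
    have "II L \<le> (\<Sum>K\<in>(\<lambda>i. {i}) ` L. II K)"
      unfolding II_def by (rule part_int[OF LN(1) partition_on_singletons cvF sub[OF LN(2)] Fnn Fm])
    also have "\<dots> = (\<Sum>i\<in>L. II {i})" by (subst sum.reindex) (auto simp: inj_on_def)
    finally have "R L \<le> (\<Sum>i\<in>L. R {i})"
      unfolding R_def using sfin LN(1) by (subst sumR[symmetric]) (auto intro!: enn2real_mono simp: less_top)
    also have "\<dots> = (\<Sum>i\<in>L. f (x i)) + real (card L) * B"
      using sing by (simp add: sum.distrib)
    finally have "R L - real (card L) * B \<le> (\<Sum>i\<in>L. f (x i))" by simp
    then show ?thesis using AF[of L] LN by simp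
  qed
  have second: "(\<Sum>L\<in>P. real (card L) * Avg_face f x L) \<le> (\<Sum>i\<in>N. f (x i))"
  proof -
    have "(\<Sum>L\<in>P. real (card L) * Avg_face f x L) \<le> (\<Sum>L\<in>P. \<Sum>i\<in>L. f (x i))"
      by (intro sum_mono blk)
    also have "\<dots> = (\<Sum>i\<in>N. f (x i))" using PS(3)[of "\<lambda>i. f (x i)"] by simp
    finally show ?thesis .
  qed
  show ?thesis using first second cN unfolding N_def by simp
qed

end
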